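(* Let $n\ge2$ and let $\mathbf{r}$ be an $\mathbb{R}^n$-valued random vector with $\mathbb{E}|r_i|<\infty$ for all $i$; set $\mathbf{R}=e^{\mathbf{r}}$ (componentwise), $\mathbf{m}=\mathbb{E}[\mathbf{r}]$, and $J(\boldsymbol{\pi})=\mathbb{E}[\gamma(\boldsymbol{\pi},\mathbf{r})]=\mathbb{E}[\log\langle\boldsymbol{\pi},\mathbf{R}\rangle]-\langle\boldsymbol{\pi},\mathbf{m}\rangle$ for $\boldsymbol{\pi}\in\Delta_n$ (which is finite). Then $\boldsymbol{\pi}^\star\in\Delta_n$ maximizes $J$ over $\Delta_n$ if and only if $$\mathbb{E}\Big[\frac{\langle\boldsymbol{\pi},\mathbf{R}\rangle}{\langle\boldsymbol{\pi}^\star,\mathbf{R}\rangle}\Big]\le1+\langle\boldsymbol{\pi}-\boldsymbol{\pi}^\star,\mathbf{m}\rangle\quad\text{for every }\boldsymbol{\pi}\in\Delta_n,$$ with equality for every $\boldsymbol{\pi}\in\Delta_n$ satisfying $\supp(\boldsymbol{\pi})\subseteq\supp(\boldsymbol{\pi}^\star)$.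
   Context: $\Delta_n=\{\mathbf{x}\in[0,1]^n:\sum_ix_i=1\}$; $\supp(\mathbf{x})=\{i:x_i>0\}$. For $\boldsymbol{\pi}\in\Delta_n$ and $\mathbf{r}\in\mathbb{R}^n$, $\gamma(\boldsymbol{\pi},\mathbf{r})=\log\big(\sum_{i\in\supp(\boldsymbol{\pi})}\pi_ie^{r_i}\big)-\sum_{i\in\supp(\boldsymbol{\pi})}\pi_ir_i$. The expectation of a nonnegative random variable may equal $+\infty$. *)

theory Defs
  imports "HOL-Probability.Probability"
begin

text \<open>Vectors in R^n are represented as functions nat => real; only indices i < n matter.\<close>

definition prob_simplex :: "nat \<Rightarrow> (nat \<Rightarrow> real) set" where
  "prob_simplex n = {x. (\<forall>i<n. 0 \<le> x i \<and> x i \<le> 1) \<and> (\<Sum>i<n. x i) = 1}"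

definition supp :: "nat \<Rightarrow> (nat \<Rightarrow> real) \<Rightarrow> nat set" where
  "supp n x = {i. i < n \<and> x i > 0}"

definition gamma :: "nat \<Rightarrow> (nat \<Rightarrow> real) \<Rightarrow> (nat \<Rightarrow> real) \<Rightarrow> real" where
  "gamma n p r = ln (\<Sum>i\<in>supp n p. p i * exp (r i)) - (\<Sum>i\<in>supp n p. p i * r i)"

end

theory Submission
  imports Defs
begin

definition SS :: "nat \<Rightarrow> (nat\<Rightarrow>real) \<Rightarrow> (nat\<Rightarrow>real) \<Rightarrow> real" where
  "SS n p x = (\<Sum>i<n. p i * exp (x i))"

lemma simplex_nonneg: "p \<in> prob_simplex n \<Longrightarrow> i < n \<Longrightarrow> 0 \<le> p i"
  by (simp add: prob_simplex_def)
lemma simplex_sum: "p \<in> prob_simplex n \<Longrightarrow> (\<Sum>i<n. p i) = 1"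
  by (simp add: prob_simplex_def)

lemma simplexI:
  assumes "\<And>i. i < n \<Longrightarrow> 0 \<le> p i" "(\<Sum>i<n. p i) = 1"
  shows "p \<in> prob_simplex n"
proof -
  have "p i \<le> 1" if "i < n" for i
  proof -
    have "p i \<le> (\<Sum>i<n. p i)" by (rule member_le_sum) (use that assms in auto)
    then show ?thesis using assms by simp
  qed
  then show ?thesis using assms by (auto simp: prob_simplex_def)
qed

lemma gamma_eq:
  assumes "p \<in> prob_simplex n"
  shows "gamma n p x = ln (SS n p x) - (\<Sum>i<n. p i * x i)"
proof -
  have sub: "supp n p \<subseteq> {..<n}" by (auto simp: supp_def)
  have z: "\<And>i. i \<in> {..<n} - supp n p \<Longrightarrow> p i = 0"
    using assms by (force simp: supp_def prob_simplex_def)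
  have "(\<Sum>i\<in>supp n p. p i * exp (x i)) = (\<Sum>i<n. p i * exp (x i))"
    by (rule sum.mono_neutral_left) (use sub z in auto)
  moreover have "(\<Sum>i\<in>supp n p. p i * x i) = (\<Sum>i<n. p i * x i)"
    by (rule sum.mono_neutral_left) (use sub z in auto)
  ultimately show ?thesis by (simp add: gamma_def SS_def)
qed

lemma SS_bounds:
  assumes "p \<in> prob_simplex n"
  shows "exp (-(\<Sum>i<n. \<bar>x i\<bar>)) \<le> SS n p x" "SS n p x \<le> exp (\<Sum>i<n. \<bar>x i\<bar>)"
proof -
  let ?A = "\<Sum>i<n. \<bar>x i\<bar>"
  have le: "\<bar>x i\<bar> \<le> ?A" if "i<n" for i
    by (rule member_le_sum) (use that in auto)
  have "exp (-?A) = (\<Sum>i<n. p i * exp (-?A))" using simplex_sum[OF assms]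
    by (simp add: sum_distrib_right[symmetric])
  also have "\<dots> \<le> SS n p x" unfolding SS_def
  proof (rule sum_mono, rule mult_left_mono)
    fix i assume "i \<in> {..<n}"
    then show "exp (-?A) \<le> exp (x i)" "0 \<le> p i" using le[of i] simplex_nonneg[OF assms, of i] by auto
  qed
  finally show "exp (-?A) \<le> SS n p x" .
  have "SS n p x \<le> (\<Sum>i<n. p i * exp ?A)" unfolding SS_def
  proof (rule sum_mono, rule mult_left_mono)
    fix i assume "i \<in> {..<n}"
    then show "exp (x i) \<le> exp ?A" "0 \<le> p i" using le[of i] simplex_nonneg[OF assms, of i] by auto
  qed
  also have "\<dots> = exp ?A" using simplex_sum[OF assms] by (simp add: sum_distrib_right[symmetric])
  finally show "SS n p x \<le> exp ?A" .
qed

lemma SS_pos: "p \<in> prob_simplex n \<Longrightarrow> 0 < SS n p x"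
  using SS_bounds(1)[of p n x] by (meson exp_gt_zero less_le_trans)

lemma ln_SS_abs:
  assumes "p \<in> prob_simplex n"
  shows "\<bar>ln (SS n p x)\<bar> \<le> (\<Sum>i<n. \<bar>x i\<bar>)"
proof -
  have pos: "0 < SS n p x" using SS_pos[OF assms] .
  have "ln (SS n p x) \<le> ln (exp (\<Sum>i<n. \<bar>x i\<bar>))"
    using SS_bounds(2)[OF assms, of x] pos by (subst ln_le_cancel_iff) auto
  moreover have "ln (exp (-(\<Sum>i<n. \<bar>x i\<bar>))) \<le> ln (SS n p x)"
    using SS_bounds(1)[OF assms, of x] pos by (subst ln_le_cancel_iff) auto
  ultimately show ?thesis by simp
qed

lemma SS_comb: "SS n (\<lambda>i. q i + t * (p i - q i)) x = SS n q x + t * (SS n p x - SS n q x)"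
  unfolding SS_def by (simp add: algebra_simps sum.distrib sum_subtractf sum_distrib_left)

lemma comb_sum:
  fixes p q m :: "nat \<Rightarrow> real" and t :: real
  shows
  "(\<Sum>i<n. (q i + t * (p i - q i)) * m i) - (\<Sum>i<n. q i * m i) = t * (\<Sum>i<n. (p i - q i) * m i)"
proof -
  have "(\<Sum>i<n. (q i + t * (p i - q i)) * m i) = (\<Sum>i<n. q i * m i + t * ((p i - q i) * m i))"
    by (rule sum.cong) (auto simp: algebra_simps)
  then show ?thesis by (simp add: sum.distrib sum_distrib_left)
qed

lemma comb_simplex:
  assumes "p \<in> prob_simplex n" "q \<in> prob_simplex n" "0 \<le> t" "t \<le> 1"
  shows "(\<lambda>i. q i + t * (p i - q i)) \<in> prob_simplex n"
proof (rule simplexI)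
  fix i assume i: "i < n"
  have "q i + t * (p i - q i) = (1 - t) * q i + t * p i" by algebra
  also have "\<dots> \<ge> 0" using assms simplex_nonneg[OF assms(1) i] simplex_nonneg[OF assms(2) i] by simp
  finally show "0 \<le> q i + t * (p i - q i)" .
next
  show "(\<Sum>i<n. q i + t * (p i - q i)) = 1"
    using simplex_sum[OF assms(1)] simplex_sum[OF assms(2)]
    by (simp add: sum.distrib sum_subtractf sum_distrib_left[symmetric])
qed

lemma ratio_ln:
  assumes "p \<in> prob_simplex n" "q \<in> prob_simplex n" "(\<lambda>i. q i + t * (p i - q i)) \<in> prob_simplex n"
  shows "ln (SS n (\<lambda>i. q i + t * (p i - q i)) x) - ln (SS n q x)
       = ln (1 + t * (SS n p x / SS n q x - 1))"
proof -
  have q: "0 < SS n q x" using SS_pos[OF assms(2)] .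
  have c: "0 < SS n (\<lambda>i. q i + t * (p i - q i)) x" using SS_pos[OF assms(3)] .
  have e: "SS n (\<lambda>i. q i + t * (p i - q i)) x = SS n q x * (1 + t * (SS n p x / SS n q x - 1))"
    unfolding SS_comb using q by (simp add: field_simps)
  have "0 < 1 + t * (SS n p x / SS n q x - 1)" using c q unfolding e by (simp add: zero_less_mult_iff)
  then show ?thesis unfolding e using q by (simp add: ln_mult)
qed

context
  fixes M :: "'a measure" and r :: "'a \<Rightarrow> nat \<Rightarrow> real" and n :: nat
  assumes P: "prob_space M" and I: "\<And>i. i<n \<Longrightarrow> integrable M (\<lambda>\<omega>. r \<omega> i)"
begin

lemma meas_r: "i<n \<Longrightarrow> (\<lambda>\<omega>. r \<omega> i) \<in> borel_measurable M"
  using I by auto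

lemma meas_SS: "(\<lambda>\<omega>. SS n p (r \<omega>)) \<in> borel_measurable M"
  unfolding SS_def
  by (rule borel_measurable_sum) (use meas_r in auto)

lemma integ_A: "integrable M (\<lambda>\<omega>. \<Sum>i<n. \<bar>r \<omega> i\<bar>)"
  by (intro Bochner_Integration.integrable_sum integrable_abs I) auto

lemma integ_lnSS:
  assumes "p \<in> prob_simplex n"
  shows "integrable M (\<lambda>\<omega>. ln (SS n p (r \<omega>)))"
proof (rule Bochner_Integration.integrable_bound[OF integ_A])
  show "(\<lambda>\<omega>. ln (SS n p (r \<omega>))) \<in> borel_measurable M" using meas_SS by measurable
  show "AE x in M. norm (ln (SS n p (r x))) \<le> norm (\<Sum>i<n. \<bar>r x i\<bar>)"
    using ln_SS_abs[OF assms] by (auto intro: order_trans)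
qed

lemma J_eq:
  assumes "p \<in> prob_simplex n"
  shows "integral\<^sup>L M (\<lambda>\<omega>. gamma n p (r \<omega>))
       = integral\<^sup>L M (\<lambda>\<omega>. ln (SS n p (r \<omega>))) - (\<Sum>i<n. p i * integral\<^sup>L M (\<lambda>\<omega>. r \<omega> i))"
proof -
  have "integral\<^sup>L M (\<lambda>\<omega>. gamma n p (r \<omega>))
      = integral\<^sup>L M (\<lambda>\<omega>. ln (SS n p (r \<omega>)) - (\<Sum>i<n. p i * r \<omega> i))"
    using gamma_eq[OF assms] by simp
  also have "\<dots> = integral\<^sup>L M (\<lambda>\<omega>. ln (SS n p (r \<omega>))) - integral\<^sup>L M (\<lambda>\<omega>. \<Sum>i<n. p i * r \<omega> i)"
    by (rule Bochner_Integration.integral_diff) (auto intro!: integ_lnSS[OF assms] Bochner_Integration.integrable_sum integrable_mult_right I)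
  also have "integral\<^sup>L M (\<lambda>\<omega>. \<Sum>i<n. p i * r \<omega> i) = (\<Sum>i<n. p i * integral\<^sup>L M (\<lambda>\<omega>. r \<omega> i))"
    by (subst Bochner_Integration.integral_sum) (auto intro!: integrable_mult_right I)
  finally show ?thesis .
qed

lemma J_diff:
  assumes "p \<in> prob_simplex n" "q \<in> prob_simplex n" "(\<lambda>i. q i + t * (p i - q i)) \<in> prob_simplex n"
  shows "integral\<^sup>L M (\<lambda>\<omega>. gamma n (\<lambda>i. q i + t * (p i - q i)) (r \<omega>)) - integral\<^sup>L M (\<lambda>\<omega>. gamma n q (r \<omega>))
     = integral\<^sup>L M (\<lambda>\<omega>. ln (1 + t * (SS n p (r \<omega>) / SS n q (r \<omega>) - 1)))
       - t * (\<Sum>i<n. (p i - q i) * integral\<^sup>L M (\<lambda>\<omega>. r \<omega> i))"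
proof -
  have "integral\<^sup>L M (\<lambda>\<omega>. ln (1 + t * (SS n p (r \<omega>) / SS n q (r \<omega>) - 1)))
     = integral\<^sup>L M (\<lambda>\<omega>. ln (SS n (\<lambda>i. q i + t * (p i - q i)) (r \<omega>)) - ln (SS n q (r \<omega>)))"
    using ratio_ln[OF assms(1,2,3)] by simp
  also have "\<dots> = integral\<^sup>L M (\<lambda>\<omega>. ln (SS n (\<lambda>i. q i + t * (p i - q i)) (r \<omega>))) - integral\<^sup>L M (\<lambda>\<omega>. ln (SS n q (r \<omega>)))"
    by (rule Bochner_Integration.integral_diff) (auto intro!: integ_lnSS assms)
  finally show ?thesis
    unfolding J_eq[OF assms(3)] J_eq[OF assms(2)] using comb_sum[where m="\<lambda>i. integral\<^sup>L M (\<lambda>\<omega>. r \<omega> i)" and n=n and q=q and t=t and p=p]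
    by linarith
qed


lemma integ_lnratio:
  assumes "p \<in> prob_simplex n" "q \<in> prob_simplex n" "(\<lambda>i. q i + t * (p i - q i)) \<in> prob_simplex n"
  shows "integrable M (\<lambda>\<omega>. ln (1 + t * (SS n p (r \<omega>) / SS n q (r \<omega>) - 1)))"
proof -
  have "integrable M (\<lambda>\<omega>. ln (SS n (\<lambda>i. q i + t * (p i - q i)) (r \<omega>)) - ln (SS n q (r \<omega>)))"
    by (auto intro!: integ_lnSS assms)
  then show ?thesis using ratio_ln[OF assms] by simp
qed

lemma meas_X: "(\<lambda>\<omega>. SS n p (r \<omega>) / SS n q (r \<omega>)) \<in> borel_measurable M"
  using meas_SS by measurable

lemma nn_bound:
  assumes f: "f \<in> borel_measurable M" and pos: "\<And>\<omega>. 0 < f \<omega>"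
    and le: "(\<integral>\<^sup>+\<omega>. ennreal (f \<omega>) \<partial>M) \<le> ennreal c"
  shows "integrable M f" "integral\<^sup>L M f \<le> c"
proof -
  interpret prob_space M by (rule P)
  show int: "integrable M f"
  proof (rule integrableI_nonneg)
    show "(\<integral>\<^sup>+\<omega>. ennreal (f \<omega>) \<partial>M) < \<infinity>" using le le_less_trans by fastforce
  qed (use f pos in \<open>auto simp: less_imp_le\<close>)
  have eq: "(\<integral>\<^sup>+\<omega>. ennreal (f \<omega>) \<partial>M) = ennreal (integral\<^sup>L M f)"
    by (rule nn_integral_eq_integral[OF int]) (use pos in \<open>auto simp: less_imp_le\<close>)
  show "integral\<^sup>L M f \<le> c"
  proof (cases "c \<ge> 0")
    case True
    then show ?thesis using le unfolding eq by (simp add: ennreal_le_iff)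
  next
    case False
    then have "(\<integral>\<^sup>+\<omega>. ennreal (f \<omega>) \<partial>M) = 0" using le by (simp add: ennreal_neg)
    then have "AE \<omega> in M. ennreal (f \<omega>) = 0" using f by (subst (asm) nn_integral_0_iff_AE) auto
    moreover have "AE \<omega> in M. ennreal (f \<omega>) \<noteq> 0" using pos by (intro AE_I2) (metis ennreal_eq_0_iff not_le)
    ultimately have "AE \<omega> in M. False" by eventually_elim simp
    then show ?thesis by simp
  qed
qed

lemma suff:
  assumes p: "p \<in> prob_simplex n" and ps: "ps \<in> prob_simplex n"
    and le: "(\<integral>\<^sup>+\<omega>. ennreal (SS n p (r \<omega>) / SS n ps (r \<omega>)) \<partial>M)
        \<le> ennreal (1 + (\<Sum>i<n. (p i - ps i) * integral\<^sup>L M (\<lambda>\<omega>. r \<omega> i)))"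
  shows "integral\<^sup>L M (\<lambda>\<omega>. gamma n p (r \<omega>)) \<le> integral\<^sup>L M (\<lambda>\<omega>. gamma n ps (r \<omega>))"
proof -
  interpret prob_space M by (rule P)
  define D where "D = (\<Sum>i<n. (p i - ps i) * integral\<^sup>L M (\<lambda>\<omega>. r \<omega> i))"
  define X where "X = (\<lambda>\<omega>. SS n p (r \<omega>) / SS n ps (r \<omega>))"
  have Xpos: "\<And>\<omega>. 0 < X \<omega>" unfolding X_def using SS_pos[OF p] SS_pos[OF ps] by simp
  have c1: "(\<lambda>i. ps i + 1 * (p i - ps i)) = p" by simp
  have intX: "integrable M X" and EX: "integral\<^sup>L M X \<le> 1 + D"
    using nn_bound[of X "1 + D"] meas_X Xpos le unfolding X_def D_def by auto
  have intl: "integrable M (\<lambda>\<omega>. ln (X \<omega>))"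
    using integ_lnratio[of p ps 1] p ps unfolding X_def by simp
  have "integral\<^sup>L M (\<lambda>\<omega>. gamma n p (r \<omega>)) - integral\<^sup>L M (\<lambda>\<omega>. gamma n ps (r \<omega>))
     = integral\<^sup>L M (\<lambda>\<omega>. ln (X \<omega>)) - D"
    using J_diff[of p ps 1] p ps unfolding X_def D_def by simp
  also have "integral\<^sup>L M (\<lambda>\<omega>. ln (X \<omega>)) \<le> integral\<^sup>L M (\<lambda>\<omega>. X \<omega> - 1)"
    by (rule integral_mono) (use intl intX Xpos in \<open>auto intro!: ln_le_minus_one\<close>)
  also have "integral\<^sup>L M (\<lambda>\<omega>. X \<omega> - 1) = integral\<^sup>L M X - 1"
    using intX by (simp add: prob_space)
  finally show ?thesis using EX by simp
qed


lemma hbounds: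
  fixes t Y :: real
  assumes t: "0 < t" "t \<le> 1/2" and Y: "-1 \<le> Y"
  shows "-2 \<le> Y / (1 + t * Y)" "Y / (1 + t * Y) \<le> 1 / t" "t * (Y / (1 + t * Y)) \<le> ln (1 + t * Y)"
proof -
  have tY: "- t \<le> t * Y" using mult_left_mono[OF Y, of t] t by simp
  have d: "0 < 1 + t * Y" using tY t by linarith
  have "-1 * (1 + 2*t) \<le> Y * (1 + 2*t)" by (rule mult_right_mono) (use Y t in auto)
  then have "-2 * (1 + t * Y) \<le> Y" using t by (simp add: algebra_simps)
  then show "-2 \<le> Y / (1 + t * Y)" using d by (simp add: le_divide_eq)
  show "Y / (1 + t * Y) \<le> 1 / t" using d t by (simp add: divide_simps)
  have "ln (1 / (1 + t * Y)) \<le> 1 / (1 + t * Y) - 1" using d by (intro ln_le_minus_one) simp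
  then have "1 - 1 / (1 + t * Y) \<le> ln (1 + t * Y)" using d by (simp add: ln_div)
  moreover have "1 - 1 / (1 + t * Y) = t * (Y / (1 + t * Y))" using d by (simp add: field_simps)
  ultimately show "t * (Y / (1 + t * Y)) \<le> ln (1 + t * Y)" by simp
qed

lemma nec_le:
  assumes p: "p \<in> prob_simplex n" and ps: "ps \<in> prob_simplex n"
    and opt: "\<And>q. q \<in> prob_simplex n \<Longrightarrow>
        integral\<^sup>L M (\<lambda>\<omega>. gamma n q (r \<omega>)) \<le> integral\<^sup>L M (\<lambda>\<omega>. gamma n ps (r \<omega>))"
  shows "(\<integral>\<^sup>+\<omega>. ennreal (SS n p (r \<omega>) / SS n ps (r \<omega>)) \<partial>M)
        \<le> ennreal (1 + (\<Sum>i<n. (p i - ps i) * integral\<^sup>L M (\<lambda>\<omega>. r \<omega> i)))"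
proof -
  interpret prob_space M by (rule P)
  define D where "D = (\<Sum>i<n. (p i - ps i) * integral\<^sup>L M (\<lambda>\<omega>. r \<omega> i))"
  define X where "X = (\<lambda>\<omega>. SS n p (r \<omega>) / SS n ps (r \<omega>))"
  have Xpos: "\<And>\<omega>. 0 < X \<omega>" unfolding X_def using SS_pos[OF p] SS_pos[OF ps] by simp
  have measX: "X \<in> borel_measurable M" unfolding X_def by (rule meas_X)
  define h where "h = (\<lambda>t \<omega>. (X \<omega> - 1) / (1 + t * (X \<omega> - 1)))"
  have meash: "\<And>t. h t \<in> borel_measurable M" unfolding h_def using measX by measurable
  have Y: "\<And>\<omega>. -1 \<le> X \<omega> - 1" using Xpos by (simp add: less_imp_le)
  have Jineq: "integral\<^sup>L M (\<lambda>\<omega>. ln (1 + t * (X \<omega> - 1))) \<le> t * D" if "0 \<le> t" "t \<le> 1" for t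
  proof -
    have qs: "(\<lambda>i. ps i + t * (p i - ps i)) \<in> prob_simplex n" by (rule comb_simplex) (use p ps that in auto)
    show ?thesis using J_diff[OF p ps qs] opt[OF qs] unfolding X_def D_def by simp
  qed
  have Eh: "integral\<^sup>L M (h t) \<le> D" and inth: "integrable M (h t)" if t: "0 < t" "t \<le> 1/2" for t
  proof -
    have b: "\<And>\<omega>. -2 \<le> h t \<omega> \<and> h t \<omega> \<le> 1/t \<and> t * h t \<omega> \<le> ln (1 + t * (X \<omega> - 1))"
      unfolding h_def using hbounds[OF t Y] by blast
    show inth: "integrable M (h t)"
    proof (rule integrable_const_bound[where B="max 2 (1/t)"])
      show "AE x in M. norm (h t x) \<le> max 2 (1 / t)" proof (intro AE_I2)
        fix x
        have "-2 \<le> h t x" "h t x \<le> 1/t" using b by auto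
        then show "norm (h t x) \<le> max 2 (1 / t)"
          unfolding real_norm_def abs_le_iff using max.cobounded1[of 2 "1/t"] max.cobounded2[of "1/t" 2] by linarith
      qed
    qed (rule meash)
    have qs: "(\<lambda>i. ps i + t * (p i - ps i)) \<in> prob_simplex n" by (rule comb_simplex) (use p ps t in auto)
    have "t * integral\<^sup>L M (h t) = integral\<^sup>L M (\<lambda>\<omega>. t * h t \<omega>)" by simp
    also have "\<dots> \<le> integral\<^sup>L M (\<lambda>\<omega>. ln (1 + t * (X \<omega> - 1)))"
      by (rule integral_mono) (use inth b integ_lnratio[OF p ps qs] in \<open>auto simp: X_def\<close>)
    also have "\<dots> \<le> t * D" by (rule Jineq) (use t in auto)
    finally show "integral\<^sup>L M (h t) \<le> D" using t by simp
  qed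
  define tk where "tk = (\<lambda>k::nat. inverse (real (Suc k)) / 2)"
  have tk: "0 < tk k" "tk k \<le> 1/2" for k unfolding tk_def by (auto simp: field_simps)
  have tk0: "tk \<longlonglongrightarrow> 0" unfolding tk_def using tendsto_divide[OF LIMSEQ_inverse_real_of_nat tendsto_const[of "2::real"]] by simp
  define u where "u = (\<lambda>k \<omega>. ennreal (h (tk k) \<omega> + 2))"
  have "(\<integral>\<^sup>+\<omega>. liminf (\<lambda>k. u k \<omega>) \<partial>M) \<le> liminf (\<lambda>k. integral\<^sup>N M (u k))"
    by (rule nn_integral_liminf) (use meash in \<open>auto simp: u_def\<close>)
  also have "\<dots> \<le> ennreal (D + 2)"
  proof (rule Liminf_le)
    show "\<forall>\<^sub>F k in sequentially. integral\<^sup>N M (u k) \<le> ennreal (D + 2)"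
    proof (intro always_eventually allI)
      fix k
      have int2: "integrable M (\<lambda>\<omega>. h (tk k) \<omega> + 2)" using inth[OF tk(1,2)[of k]] by simp
      have nn: "\<And>\<omega>. 0 \<le> h (tk k) \<omega> + 2" using hbounds(1)[OF tk(1,2)[of k] Y] unfolding h_def by (metis add.commute diff_ge_0_iff_ge diff_minus_eq_add)
      have "integral\<^sup>N M (u k) = ennreal (integral\<^sup>L M (\<lambda>\<omega>. h (tk k) \<omega> + 2))"
        unfolding u_def by (rule nn_integral_eq_integral[OF int2]) (use nn in auto)
      also have "integral\<^sup>L M (\<lambda>\<omega>. h (tk k) \<omega> + 2) = integral\<^sup>L M (h (tk k)) + 2"
        using inth[OF tk(1,2)[of k]] by (simp add: prob_space)
      also have "ennreal (integral\<^sup>L M (h (tk k)) + 2) \<le> ennreal (D + 2)"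
        using Eh[OF tk(1,2)[of k]] by (intro ennreal_leI) simp
      finally show "integral\<^sup>N M (u k) \<le> ennreal (D + 2)" .
    qed
  qed simp
  finally have F: "(\<integral>\<^sup>+\<omega>. liminf (\<lambda>k. u k \<omega>) \<partial>M) \<le> ennreal (D + 2)" .
  have lim: "liminf (\<lambda>k. u k \<omega>) = ennreal (X \<omega>) + 1" for \<omega>
  proof -
    have "(\<lambda>k. h (tk k) \<omega> + 2) \<longlonglongrightarrow> (X \<omega> - 1) / (1 + 0 * (X \<omega> - 1)) + 2"
      unfolding h_def by (intro tendsto_intros tk0) simp
    then have "(\<lambda>k. u k \<omega>) \<longlonglongrightarrow> ennreal (X \<omega> + 1)" unfolding u_def by (intro tendsto_ennrealI) (simp add: add.commute)
    then have "liminf (\<lambda>k. u k \<omega>) = ennreal (X \<omega> + 1)" by (rule lim_imp_Liminf[rotated]) simp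
    then show ?thesis using Xpos[of \<omega>] by simp
  qed
  have "(\<integral>\<^sup>+\<omega>. liminf (\<lambda>k. u k \<omega>) \<partial>M) = (\<integral>\<^sup>+\<omega>. ennreal (X \<omega>) \<partial>M) + 1"
    unfolding lim by (subst nn_integral_add) (use measX in \<open>auto simp: emeasure_space_1\<close>)
  with F have G: "(\<integral>\<^sup>+\<omega>. ennreal (X \<omega>) \<partial>M) + 1 \<le> ennreal (D + 2)" by simp
  have "(\<integral>\<^sup>+\<omega>. ennreal (X \<omega>) \<partial>M) \<le> (\<integral>\<^sup>+\<omega>. ennreal (X \<omega>) \<partial>M) + 1"
    by (rule add_increasing2) auto
  also note G
  also have "ennreal (D + 2) < \<infinity>" by simp
  finally have "(\<integral>\<^sup>+\<omega>. ennreal (X \<omega>) \<partial>M) < \<infinity>" .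
  then obtain b where b: "0 \<le> b" "(\<integral>\<^sup>+\<omega>. ennreal (X \<omega>) \<partial>M) = ennreal b"
    by (cases "(\<integral>\<^sup>+\<omega>. ennreal (X \<omega>) \<partial>M)") auto
  have "ennreal (b + 1) \<le> ennreal (D + 2)" using G b by simp
  then have "b + 1 \<le> D + 2"
  proof (cases "0 \<le> D + 2")
    case True
    then show ?thesis using \<open>ennreal (b + 1) \<le> ennreal (D + 2)\<close> by (simp add: ennreal_le_iff)
  next
    case False
    then have "ennreal (b + 1) \<le> 0" using \<open>ennreal (b + 1) \<le> ennreal (D + 2)\<close> by (simp add: ennreal_neg)
    then show ?thesis using b(1) by simp
  qed
  then have "ennreal b \<le> ennreal (1 + D)" by (intro ennreal_leI) simp
  then show ?thesis using b unfolding X_def D_def by simp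
qed


lemma lnlow:
  fixes z :: real
  assumes "-1/2 \<le> z"
  shows "z - 2 * z^2 \<le> ln (1 + z)"
proof -
  have d: "0 < 1 + z" using assms by linarith
  have "ln (1 / (1 + z)) \<le> 1 / (1 + z) - 1" using d by (intro ln_le_minus_one) simp
  then have a: "1 - 1 / (1 + z) \<le> ln (1 + z)" using d by (simp add: ln_div)
  have "0 \<le> z^2 * (1 + 2*z)" using assms by (intro mult_nonneg_nonneg) auto
  then have "(z - 2 * z^2) * (1 + z) \<le> z" by (simp add: algebra_simps power2_eq_square power3_eq_cube)
  then have "z - 2 * z^2 \<le> z / (1 + z)" using d by (simp add: le_divide_eq)
  also have "z / (1 + z) = 1 - 1 / (1 + z)" using d by (simp add: field_simps)
  finally show ?thesis using a by linarith
qed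

lemma nec_eq:
  assumes p: "p \<in> prob_simplex n" and ps: "ps \<in> prob_simplex n"
    and opt: "\<And>q. q \<in> prob_simplex n \<Longrightarrow>
        integral\<^sup>L M (\<lambda>\<omega>. gamma n q (r \<omega>)) \<le> integral\<^sup>L M (\<lambda>\<omega>. gamma n ps (r \<omega>))"
    and sub: "supp n p \<subseteq> supp n ps"
  shows "(\<integral>\<^sup>+\<omega>. ennreal (SS n p (r \<omega>) / SS n ps (r \<omega>)) \<partial>M)
        = ennreal (1 + (\<Sum>i<n. (p i - ps i) * integral\<^sup>L M (\<lambda>\<omega>. r \<omega> i)))"
proof -
  interpret prob_space M by (rule P)
  define D where "D = (\<Sum>i<n. (p i - ps i) * integral\<^sup>L M (\<lambda>\<omega>. r \<omega> i))"
  define X where "X = (\<lambda>\<omega>. SS n p (r \<omega>) / SS n ps (r \<omega>))"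
  have Xpos: "\<And>\<omega>. 0 < X \<omega>" unfolding X_def using SS_pos[OF p] SS_pos[OF ps] by simp
  have measX: "X \<in> borel_measurable M" unfolding X_def by (rule meas_X)
  have le: "(\<integral>\<^sup>+\<omega>. ennreal (X \<omega>) \<partial>M) \<le> ennreal (1 + D)"
    using nec_le[OF p ps opt] unfolding X_def D_def by simp
  have intX: "integrable M X" and EX: "integral\<^sup>L M X \<le> 1 + D"
    using nn_bound[OF measX Xpos le] by auto
  define C where "C = (\<Sum>i<n. p i / ps i)"
  have pC: "p i \<le> C * ps i" if i: "i < n" for i
  proof (cases "ps i = 0")
    case True
    have "\<not> p i > 0"
    proof
      assume "p i > 0"
      then have "i \<in> supp n p" using i by (simp add: supp_def)
      then have "i \<in> supp n ps" using sub by blast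
      then show False using True by (simp add: supp_def)
    qed
    then show ?thesis using True simplex_nonneg[OF p i] by simp
  next
    case False
    then have pos: "0 < ps i" using simplex_nonneg[OF ps i] by simp
    have "p i / ps i \<le> C" unfolding C_def
      by (rule member_le_sum) (use i simplex_nonneg[OF p] simplex_nonneg[OF ps] in auto)
    then have "p i / ps i * ps i \<le> C * ps i" using pos by (intro mult_right_mono) auto
    then show ?thesis using pos by simp
  qed
  have C1: "1 \<le> C"
  proof -
    have "(\<Sum>i<n. p i) \<le> (\<Sum>i<n. C * ps i)" by (rule sum_mono) (use pC in auto)
    then show ?thesis using simplex_sum[OF p] simplex_sum[OF ps] by (simp add: sum_distrib_left[symmetric])
  qed
  have XC: "X \<omega> \<le> C" for \<omega>
  proof -
    have "SS n p (r \<omega>) \<le> (\<Sum>i<n. (C * ps i) * exp (r \<omega> i))" unfolding SS_def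
      by (rule sum_mono, rule mult_right_mono) (use pC in auto)
    also have "\<dots> = C * SS n ps (r \<omega>)" unfolding SS_def by (simp add: sum_distrib_left mult.assoc)
    finally show ?thesis unfolding X_def using SS_pos[OF ps] by (simp add: pos_divide_le_eq)
  qed
  have X1: "(X \<omega> - 1)^2 \<le> C^2" for \<omega>
  proof -
    have "\<bar>X \<omega> - 1\<bar> \<le> C" using XC[of \<omega>] Xpos[of \<omega>] C1 by (simp add: abs_le_iff)
    then have "\<bar>X \<omega> - 1\<bar>^2 \<le> C^2" by (intro power_mono) auto
    then show ?thesis by simp
  qed
  have key: "D + 1 - integral\<^sup>L M X \<le> 2 * s * C^2" if s: "0 < s" "s \<le> 1 / (2 * C)" for s
  proof -
    have sC: "s * C \<le> 1/2" using s C1 by (simp add: field_simps)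
    have qs: "(\<lambda>i. ps i + (-s) * (p i - ps i)) \<in> prob_simplex n"
    proof (rule simplexI)
      fix i assume i: "i < n"
      have A: "s * p i \<le> s * (C * ps i)" using pC[OF i] s by (intro mult_left_mono) auto
      have B: "(s * C) * ps i \<le> 1/2 * ps i" using sC simplex_nonneg[OF ps i]
        by (rule mult_right_mono)
      have E: "ps i + (-s) * (p i - ps i) = ps i - s * p i + s * ps i" by algebra
      have F: "0 \<le> s * ps i" using s simplex_nonneg[OF ps i] by simp
      have G: "s * (C * ps i) = (s * C) * ps i" by simp
      show "0 \<le> ps i + (-s) * (p i - ps i)" unfolding E using A B F G simplex_nonneg[OF ps i] by linarith
next
      show "(\<Sum>i<n. ps i + (-s) * (p i - ps i)) = 1"
        using simplex_sum[OF p] simplex_sum[OF ps]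
        by (simp add: sum.distrib sum_subtractf sum_distrib_left[symmetric])
    qed
    have Jineq: "integral\<^sup>L M (\<lambda>\<omega>. ln (1 + (-s) * (X \<omega> - 1))) \<le> (-s) * D"
      using J_diff[OF p ps qs] opt[OF qs] unfolding X_def D_def by simp
    have pw: "-s * (X \<omega> - 1) - 2 * s^2 * C^2 \<le> ln (1 + (-s) * (X \<omega> - 1))" for \<omega>
    proof -
      have "-1/2 \<le> (-s) * (X \<omega> - 1)"
      proof -
        have "s * (X \<omega> - 1) \<le> s * C" using XC[of \<omega>] s by (intro mult_left_mono) auto
        then show ?thesis using sC by simp
      qed
      from lnlow[OF this] have "(-s) * (X \<omega> - 1) - 2 * ((-s) * (X \<omega> - 1))^2 \<le> ln (1 + (-s) * (X \<omega> - 1))" .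
      moreover have "((-s) * (X \<omega> - 1))^2 \<le> s^2 * C^2"
        using X1[of \<omega>] s by (simp add: power_mult_distrib mult_left_mono)
      ultimately show ?thesis by simp
    qed
    have "integral\<^sup>L M (\<lambda>\<omega>. -s * (X \<omega> - 1) - 2 * s^2 * C^2) \<le> integral\<^sup>L M (\<lambda>\<omega>. ln (1 + (-s) * (X \<omega> - 1)))"
      by (rule integral_mono) (use pw intX integ_lnratio[OF p ps qs] in \<open>auto simp: X_def\<close>)
    also have "integral\<^sup>L M (\<lambda>\<omega>. -s * (X \<omega> - 1) - 2 * s^2 * C^2) = -s * (integral\<^sup>L M X - 1) - 2 * s^2 * C^2"
      using intX by (simp add: prob_space)
    finally have "-s * (integral\<^sup>L M X - 1) - 2 * s^2 * C^2 \<le> (-s) * D" using Jineq by linarith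
    then have "s * (D + 1 - integral\<^sup>L M X) \<le> s * (2 * s * C^2)" by (simp add: algebra_simps power2_eq_square)
    then show ?thesis using s by simp
  qed
  have "D + 1 \<le> integral\<^sup>L M X"
  proof (rule ccontr)
    assume nt: "\<not> D + 1 \<le> integral\<^sup>L M X"
    define e where "e = D + 1 - integral\<^sup>L M X"
    have e: "0 < e" using nt unfolding e_def by simp
    define s where "s = min (1 / (2 * C)) (e / (4 * C^2))"
    have Cp: "0 < C" using C1 by simp
    have s0: "0 < s" unfolding s_def using e Cp by simp
    have s1: "s \<le> 1 / (2 * C)" unfolding s_def by simp
    have "e \<le> 2 * s * C^2" using key[OF s0 s1] unfolding e_def .
    also have "\<dots> \<le> 2 * (e / (4 * C^2)) * C^2" unfolding s_def using Cp by (intro mult_right_mono mult_left_mono) auto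
    also have "\<dots> = e / 2" using Cp by (simp add: field_simps)
    finally show False using e by simp
  qed
  then have eq: "integral\<^sup>L M X = 1 + D" using EX by simp
  have "(\<integral>\<^sup>+\<omega>. ennreal (X \<omega>) \<partial>M) = ennreal (integral\<^sup>L M X)"
    by (rule nn_integral_eq_integral[OF intX]) (use Xpos in \<open>auto simp: less_imp_le\<close>)
  then show ?thesis using eq unfolding X_def D_def by simp
qed

end

theorem mainTheorem19:
  fixes M :: "'a measure" and r :: "'a \<Rightarrow> nat \<Rightarrow> real" and n :: nat
    and pstar :: "nat \<Rightarrow> real"
  assumes "prob_space M"
    and "n \<ge> 2"
    and "\<And>i. i < n \<Longrightarrow> integrable M (\<lambda>\<omega>. r \<omega> i)"
    and "pstar \<in> prob_simplex n"
  defines "m \<equiv> (\<lambda>i. integral\<^sup>L M (\<lambda>\<omega>. r \<omega> i))"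
    and "J \<equiv> (\<lambda>p. integral\<^sup>L M (\<lambda>\<omega>. gamma n p (r \<omega>)))"
  shows "(\<forall>p\<in>prob_simplex n. J p \<le> J pstar) \<longleftrightarrow>
         ((\<forall>p\<in>prob_simplex n.
             (\<integral>\<^sup>+ \<omega>. ennreal ((\<Sum>i<n. p i * exp (r \<omega> i)) / (\<Sum>i<n. pstar i * exp (r \<omega> i))) \<partial>M)
               \<le> ennreal (1 + (\<Sum>i<n. (p i - pstar i) * m i))) \<and>
          (\<forall>p\<in>prob_simplex n. supp n p \<subseteq> supp n pstar \<longrightarrow>
             (\<integral>\<^sup>+ \<omega>. ennreal ((\<Sum>i<n. p i * exp (r \<omega> i)) / (\<Sum>i<n. pstar i * exp (r \<omega> i))) \<partial>M)
               = ennreal (1 + (\<Sum>i<n. (p i - pstar i) * m i))))"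
  unfolding SS_def[symmetric] m_def J_def
proof
  assume opt: "\<forall>p\<in>prob_simplex n. integral\<^sup>L M (\<lambda>\<omega>. gamma n p (r \<omega>)) \<le> integral\<^sup>L M (\<lambda>\<omega>. gamma n pstar (r \<omega>))"
  then have opt': "\<And>q. q \<in> prob_simplex n \<Longrightarrow> integral\<^sup>L M (\<lambda>\<omega>. gamma n q (r \<omega>)) \<le> integral\<^sup>L M (\<lambda>\<omega>. gamma n pstar (r \<omega>))"
    by blast
  show "(\<forall>p\<in>prob_simplex n.
             (\<integral>\<^sup>+ \<omega>. ennreal (SS n p (r \<omega>) / SS n pstar (r \<omega>)) \<partial>M)
               \<le> ennreal (1 + (\<Sum>i<n. (p i - pstar i) * integral\<^sup>L M (\<lambda>\<omega>. r \<omega> i)))) \<and>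
          (\<forall>p\<in>prob_simplex n. supp n p \<subseteq> supp n pstar \<longrightarrow>
             (\<integral>\<^sup>+ \<omega>. ennreal (SS n p (r \<omega>) / SS n pstar (r \<omega>)) \<partial>M)
               = ennreal (1 + (\<Sum>i<n. (p i - pstar i) * integral\<^sup>L M (\<lambda>\<omega>. r \<omega> i))))"
    using nec_le[of M n r, OF assms(1) assms(3) _ assms(4) opt'] nec_eq[of M n r, OF assms(1) assms(3) _ assms(4) opt'] by blast
next
  assume h: "(\<forall>p\<in>prob_simplex n.
             (\<integral>\<^sup>+ \<omega>. ennreal (SS n p (r \<omega>) / SS n pstar (r \<omega>)) \<partial>M)
               \<le> ennreal (1 + (\<Sum>i<n. (p i - pstar i) * integral\<^sup>L M (\<lambda>\<omega>. r \<omega> i)))) \<and>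
          (\<forall>p\<in>prob_simplex n. supp n p \<subseteq> supp n pstar \<longrightarrow>
             (\<integral>\<^sup>+ \<omega>. ennreal (SS n p (r \<omega>) / SS n pstar (r \<omega>)) \<partial>M)
               = ennreal (1 + (\<Sum>i<n. (p i - pstar i) * integral\<^sup>L M (\<lambda>\<omega>. r \<omega> i))))"
  show "\<forall>p\<in>prob_simplex n. integral\<^sup>L M (\<lambda>\<omega>. gamma n p (r \<omega>)) \<le> integral\<^sup>L M (\<lambda>\<omega>. gamma n pstar (r \<omega>))"
    using suff[of M n r, OF assms(1) assms(3) _ assms(4)] h by blast
qed

end
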